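(* Let $\mathcal{A}\in\mathbb{C}^{n\times n\times n\times n}$ be a CPS tensor with orthogonal matrix decomposition $\mathcal{A}=\sum_{i=1}^r\lambda_iE_i\otimes\bar E_i$, where $r=rank_m(\mathcal{A})$, $0\ne\lambda_i\in\mathbb{R}$, $E_i$ complex symmetric, $\langle E_i,E_j\rangle=\delta_{ij}$. Then: (1) if every $E_i$ has rank one, then $\mathcal{A}=\sum_{i=1}^r\lambda_i' p_i\otimes p_i\otimes\bar p_i\otimes\bar p_i$ for some $\lambda_i'\in\mathbb{R}$, $p_i\in\mathbb{C}^n$ with $p_i^Hp_j=0$ for all $i\neq j$; (2) if $R=\max_i\operatorname{rank}(E_i)$, then $r\le\operatorname{rank}(\mathcal{A})\le rR^2$; (3) if $r=1$, i.e. $\mathcal{A}=\lambda E\otimes\bar E$ with $\lambda\ne0$, and $\operatorname{rank}(E)=R$, then $\operatorname{rank}(\mathcal{A})=R^2$. Here $\operatorname{rank}(\mathcal{A})$ denotes the CP rank over $\mathbb{C}$.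
   Context: A tensor $\mathcal{A}\in\mathbb{C}^{n\times n\times n\times n}$ is conjugate partial-symmetric (CPS) if $\mathcal{A}_{ijkl}=\overline{\mathcal{A}_{klij}}$ and $\mathcal{A}_{ijkl}=\mathcal{A}_{jikl}=\mathcal{A}_{ijlk}$ for all indices. For $E,F\in\mathbb{C}^{n\times n}$, $(E\otimes F)_{ijkl}=E_{ij}F_{kl}$; $\langle X,Y\rangle=\sum_{ij}X_{ij}\overline{Y_{ij}}$. $rank_m(\mathcal{A})=\min\{r:\mathcal{A}=\sum_{i=1}^r\lambda_iE_i\otimes\bar E_i,\ \lambda_i\in\mathbb{R},\ E_i=E_i^T\in\mathbb{C}^{n\times n}\}$. The CP rank $\operatorname{rank}(\mathcal{A})$ is the smallest $r$ with $\mathcal{A}=\sum_{i=1}^r u_i^1\otimes u_i^2\otimes u_i^3\otimes u_i^4$, $u_i^j\in\mathbb{C}^n$, where $(u\otimes v\otimes w\otimes z)_{ijkl}=u_iv_jw_kz_l$. *)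

theory Defs
  imports "HOL-Analysis.Analysis"
begin

type_synonym 'n tensor4 = "'n \<Rightarrow> 'n \<Rightarrow> 'n \<Rightarrow> 'n \<Rightarrow> complex"

definition CPS :: "('n::finite) tensor4 \<Rightarrow> bool" where
  "CPS A \<longleftrightarrow> (\<forall>i j k l. A i j k l = cnj (A k l i j) \<and> A i j k l = A j i k l \<and> A i j k l = A i j l k)"

definition kron :: "complex^'n^'n \<Rightarrow> complex^'n^'n \<Rightarrow> ('n::finite) tensor4" where
  "kron E F = (\<lambda>i j k l. E $ i $ j * F $ k $ l)"

definition mconj :: "complex^'n^'m \<Rightarrow> complex^'n^'m" where
  "mconj E = (\<chi> i j. cnj (E $ i $ j))"

definition minner :: "complex^'n^'n \<Rightarrow> complex^'n^'n \<Rightarrow> complex" where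
  "minner X Y = (\<Sum>i\<in>UNIV. \<Sum>j\<in>UNIV. X $ i $ j * cnj (Y $ i $ j))"

definition hprod :: "complex^'n \<Rightarrow> complex^'n \<Rightarrow> complex" where
  "hprod p q = (\<Sum>k\<in>UNIV. cnj (p $ k) * q $ k)"

definition rank_m :: "('n::finite) tensor4 \<Rightarrow> nat" where
  "rank_m A = (LEAST r. \<exists>(lam :: nat \<Rightarrow> real) (E :: nat \<Rightarrow> complex^'n^'n).
      (\<forall>i<r. transpose (E i) = E i) \<and>
      A = (\<lambda>a b c d. \<Sum>i<r. complex_of_real (lam i) * kron (E i) (mconj (E i)) a b c d))"

definition cp_rank :: "('n::finite) tensor4 \<Rightarrow> nat" where
  "cp_rank A = (LEAST r. \<exists>u1 u2 u3 u4 :: nat \<Rightarrow> complex^'n.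
      A = (\<lambda>a b c d. \<Sum>i<r. u1 i $ a * u2 i $ b * u3 i $ c * u4 i $ d))"

end

theory Submission
  imports Defs
begin


lemma basis_family:
  fixes E :: "'a::field^'n^'m"
  obtains g :: "nat \<Rightarrow> 'a^'n" and h :: "nat \<Rightarrow> 'm"
  where "\<And>k. k < rank E \<Longrightarrow> g k = row (h k) E"
    and "\<And>d. (\<Sum>k<rank E. d k *s g k) = 0 \<Longrightarrow> \<forall>k<rank E. d k = 0"
    and "\<And>a. row a E \<in> vec.span (g ` {..<rank E})"
    and "inj_on g {..<rank E}"
proof -
  obtain B where B: "B \<subseteq> rows E" "vec.independent B" "rows E \<subseteq> vec.span B" "card B = vec.dim (rows E)"
    using vec.basis_exists by blast
  have fin: "finite B" using B(2) vec.finiteI_independent by blast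
  obtain g where g: "bij_betw g {..<card B} B"
    using ex_bij_betw_nat_finite[OF fin] by (auto simp: lessThan_atLeast0)
  have cB: "card B = rank E" using B(4) by (simp add: row_rank_def_gen)
  have ex: "\<forall>k. \<exists>i. k < rank E \<longrightarrow> g k = row i E"
  proof
    fix k
    show "\<exists>i. k < rank E \<longrightarrow> g k = row i E"
    proof (cases "k < rank E")
      case True
      then have "g k \<in> B" using g cB by (auto simp: bij_betw_def)
      then show ?thesis using B(1) by (auto simp: rows_def)
    qed auto
  qed
  then obtain h where h: "\<And>k. k < rank E \<Longrightarrow> g k = row (h k) E" by metis
  have ind: "\<forall>k<rank E. d k = 0" if "(\<Sum>k<rank E. d k *s g k) = 0" for d
  proof -
    define c where "c v = d (the_inv_into {..<rank E} g v)" for v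
    have "(\<Sum>v\<in>B. c v *s v) = (\<Sum>k<rank E. c (g k) *s g k)"
      using sum.reindex_bij_betw[of g "{..<rank E}" B "\<lambda>v. c v *s v"] g cB by simp
    also have "\<dots> = (\<Sum>k<rank E. d k *s g k)"
      apply (rule sum.cong, simp)
      using g cB by (simp add: c_def bij_betw_def the_inv_into_f_f)
    finally have "(\<Sum>v\<in>B. c v *s v) = 0" using that by simp
    then have "\<forall>v\<in>B. c v = 0" using B(2) vec.independent_explicit by blast
    then show ?thesis
      using g cB by (auto simp: c_def bij_betw_def the_inv_into_f_f)
  qed
  have "g ` {..<rank E} = B" using g cB by (simp add: bij_betw_def)
  then have "\<And>a. row a E \<in> vec.span (g ` {..<rank E})" using B(3) by (auto simp: rows_def)
  moreover have "inj_on g {..<rank E}" using g cB by (simp add: bij_betw_def)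
  ultimately show ?thesis
    apply -
    apply (rule that[of g h])
       apply (erule h)
      apply (erule ind)
     apply blast
    apply blast
    done
qed

lemma rank_decomp:
  fixes E :: "'a::field^'n^'m"
  shows "\<exists>(x :: nat \<Rightarrow> 'a^'m) (y :: nat \<Rightarrow> 'a^'n). \<forall>a b. E$a$b = (\<Sum>k<rank E. x k $ a * y k $ b)"
proof -
  obtain g :: "nat \<Rightarrow> 'a^'n" and h where
    sp: "\<And>a. row a E \<in> vec.span (g ` {..<rank E})" and inj: "inj_on g {..<rank E}"
    using basis_family[of E] by metis
  have "\<forall>a. \<exists>u. row a E = (\<Sum>k<rank E. u k *s g k)"
  proof
    fix a
    have "row a E \<in> vec.span (g ` {..<rank E})" by (rule sp)
    then obtain u where "row a E = (\<Sum>v\<in>g ` {..<rank E}. u v *s v)"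
      by (auto simp: vec.span_finite)
    then have "row a E = (\<Sum>k<rank E. (u \<circ> g) k *s g k)"
      using inj by (simp add: sum.reindex)
    then show "\<exists>u. row a E = (\<Sum>k<rank E. u k *s g k)" by blast
  qed
  then obtain U where U: "\<And>a. row a E = (\<Sum>k<rank E. U a k *s g k)" by metis
  define x where "x k = (\<chi> a. U a k)" for k
  have "E$a$b = (\<Sum>k<rank E. x k $ a * g k $ b)" for a b
  proof -
    have "E$a$b = row a E $ b" by (simp add: row_def)
    also have "\<dots> = (\<Sum>k<rank E. x k $ a * g k $ b)" by (subst U) (simp add: x_def)
    finally show ?thesis .
  qed
  then show ?thesis by blast
qed


definition cpdec :: "('n::finite) tensor4 \<Rightarrow> nat \<Rightarrow> bool" where
  "cpdec A s \<longleftrightarrow> (\<exists>u1 u2 u3 u4 :: nat \<Rightarrow> complex^'n.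
      A = (\<lambda>a b c d. \<Sum>i<s. u1 i $ a * u2 i $ b * u3 i $ c * u4 i $ d))"

lemma cpdec_le: "cpdec A s \<Longrightarrow> cp_rank A \<le> s"
  unfolding cp_rank_def cpdec_def by (rule Least_le)

lemma cpdec_cp: "cpdec A s \<Longrightarrow> cpdec A (cp_rank A)"
  unfolding cp_rank_def cpdec_def by (rule LeastI)

lemma cpdec_set:
  fixes A :: "('n::finite) tensor4" and f1 f2 f3 f4 :: "'i \<Rightarrow> complex^'n"
  assumes "finite I" "A = (\<lambda>a b c d. \<Sum>i\<in>I. f1 i $ a * f2 i $ b * f3 i $ c * f4 i $ d)"
  shows "cpdec A (card I)"
proof -
  obtain h where h: "bij_betw h {..<card I} I"
    using ex_bij_betw_nat_finite[OF assms(1)] by (auto simp: lessThan_atLeast0)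
  have "A = (\<lambda>a b c d. \<Sum>i<card I. (f1 \<circ> h) i $ a * (f2 \<circ> h) i $ b * (f3 \<circ> h) i $ c * (f4 \<circ> h) i $ d)"
    unfolding assms(2) o_def
    by (intro ext, subst sum.reindex_bij_betw[OF h, symmetric]) (rule refl)
  then show ?thesis unfolding cpdec_def by blast
qed

lemma cpdec_mono:
  assumes "cpdec A s" "s \<le> t" shows "cpdec A t"
proof -
  obtain u1 u2 u3 u4 where A: "A = (\<lambda>a b c d. \<Sum>i<s. u1 i $ a * u2 i $ b * u3 i $ c * u4 i $ d)"
    using assms(1) unfolding cpdec_def by blast
  define v1 where "v1 i = (if i < s then u1 i else 0)" for i
  have "(\<Sum>i<t. v1 i $ a * u2 i $ b * u3 i $ c * u4 i $ d) = (\<Sum>i<s. u1 i $ a * u2 i $ b * u3 i $ c * u4 i $ d)" for a b c d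
  proof -
    have "(\<Sum>i<t. v1 i $ a * u2 i $ b * u3 i $ c * u4 i $ d) = (\<Sum>i\<in>{..<t}. if i < s then u1 i $ a * u2 i $ b * u3 i $ c * u4 i $ d else 0)"
      by (rule sum.cong) (auto simp: v1_def)
    also have "\<dots> = (\<Sum>i\<in>{..<t} \<inter> {i. i < s}. u1 i $ a * u2 i $ b * u3 i $ c * u4 i $ d)"
      by (simp add: sum.inter_restrict)
    also have "{..<t} \<inter> {i. i < s} = {..<s}" using assms(2) by auto
    finally show ?thesis .
  qed
  then have "A = (\<lambda>a b c d. \<Sum>i<t. v1 i $ a * u2 i $ b * u3 i $ c * u4 i $ d)" using A by simp
  then show ?thesis unfolding cpdec_def by blast
qed

lemma cpdec_perm:
  assumes "cpdec A s" shows "cpdec (\<lambda>a b c d. A c a d b) s"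
proof -
  obtain u1 u2 u3 u4 where A: "A = (\<lambda>a b c d. \<Sum>i<s. u1 i $ a * u2 i $ b * u3 i $ c * u4 i $ d)"
    using assms(1) unfolding cpdec_def by blast
  have "(\<lambda>a b c d. A c a d b) = (\<lambda>a b c d. \<Sum>i<s. u2 i $ a * u4 i $ b * u1 i $ c * u3 i $ d)"
    unfolding A by (intro ext sum.cong) (auto simp: mult_ac)
  then show ?thesis unfolding cpdec_def by blast
qed

lemma fam_indep:
  fixes F :: "'i \<Rightarrow> 'a::field^'m"
  assumes fin: "finite I" and ind: "\<And>c. (\<Sum>i\<in>I. c i *s F i) = 0 \<Longrightarrow> \<forall>i\<in>I. c i = 0"
  shows "inj_on F I \<and> vec.independent (F ` I)"
proof
  show inj: "inj_on F I"
  proof (rule inj_onI, rule ccontr)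
    fix i j assume ij: "i \<in> I" "j \<in> I" "F i = F j" "i \<noteq> j"
    define c where "c k = (if k = i then 1 else if k = j then -1 else (0::'a))" for k
    have "(\<Sum>k\<in>I. c k *s F k) = (\<Sum>k\<in>{i,j}. c k *s F k)"
      by (rule sum.mono_neutral_right) (use fin ij in \<open>auto simp: c_def\<close>)
    also have "\<dots> = 0" using ij by (simp add: c_def)
    finally have "\<forall>k\<in>I. c k = 0" by (rule ind)
    then show False using ij by (auto simp: c_def)
  qed
  show "vec.independent (F ` I)"
    unfolding vec.independent_explicit
  proof (intro conjI allI impI)
    show "finite (F ` I)" using fin by simp
    fix c assume "(\<Sum>v\<in>F ` I. c v *s v) = 0"
    then have "(\<Sum>i\<in>I. c (F i) *s F i) = 0" using inj by (simp add: sum.reindex)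
    then have "\<forall>i\<in>I. c (F i) = 0" by (rule ind)
    then show "\<forall>v\<in>F ` I. c v = 0" by auto
  qed
qed

lemma cp_lower:
  fixes A :: "('n::finite) tensor4" and F :: "'i \<Rightarrow> complex^('n\<times>'n)"
  assumes dec: "cpdec A s" and fin: "finite I"
    and ind: "\<And>c. (\<Sum>i\<in>I. c i *s F i) = 0 \<Longrightarrow> \<forall>i\<in>I. c i = 0"
    and sp: "\<And>i. i\<in>I \<Longrightarrow> F i \<in> vec.span (range (\<lambda>q. \<chi> p. A (fst p) (snd p) (fst q) (snd q)))"
  shows "card I \<le> s"
proof -
  obtain u1 u2 u3 u4 where A: "A = (\<lambda>a b c d. \<Sum>i<s. u1 i $ a * u2 i $ b * u3 i $ c * u4 i $ d)"
    using dec unfolding cpdec_def by blast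
  define w :: "nat \<Rightarrow> complex^('n\<times>'n)" where "w k = (\<chi> p. u1 k $ fst p * u2 k $ snd p)" for k
  have v: "(\<chi> p. A (fst p) (snd p) (fst q) (snd q)) = (\<Sum>k<s. (u3 k $ fst q * u4 k $ snd q) *s w k)" for q
    unfolding vec_eq_iff
  proof
    fix p :: "'n\<times>'n"
    show "(\<chi> p. A (fst p) (snd p) (fst q) (snd q)) $ p = (\<Sum>k<s. (u3 k $ fst q * u4 k $ snd q) *s w k) $ p"
      unfolding sum_component vector_smult_component w_def vec_lambda_beta A
      by (rule sum.cong) (simp_all add: ac_simps)
  qed
  have "range (\<lambda>q. \<chi> p. A (fst p) (snd p) (fst q) (snd q)) \<subseteq> vec.span (w ` {..<s})"
  proof clarify
    fix c d
    show "(\<chi> p. A (fst p) (snd p) (fst (c, d)) (snd (c, d))) \<in> vec.span (w ` {..<s})"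
      unfolding v by (intro vec.span_sum vec.span_scale vec.span_base) auto
  qed
  then have "vec.span (range (\<lambda>q. \<chi> p. A (fst p) (snd p) (fst q) (snd q))) \<subseteq> vec.span (w ` {..<s})"
    by (simp add: vec.span_minimal vec.subspace_span)
  then have sub: "F ` I \<subseteq> vec.span (w ` {..<s})" using sp by blast
  have fi: "inj_on F I \<and> vec.independent (F ` I)" by (rule fam_indep[OF fin ind])
  have "card (F ` I) \<le> card (w ` {..<s})"
    using vec.independent_span_bound[OF _ _ sub] fi by simp
  also have "\<dots> \<le> s" using card_image_le[of "{..<s}" w] by simp
  finally show ?thesis using fi by (simp add: card_image)
qed



lemma sum_pair_UNIV:
  "(\<Sum>q\<in>(UNIV::('a::finite\<times>'b::finite) set). f q) = (\<Sum>a\<in>UNIV. \<Sum>b\<in>UNIV. f (a,b))"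
  by (simp add: sum.cartesian_product)

lemma swap3:
  fixes c :: "'i \<Rightarrow> 'r::comm_ring_1"
  shows "(\<Sum>i\<in>I. c i * (\<Sum>a\<in>A. \<Sum>b\<in>B. f i a b)) = (\<Sum>a\<in>A. \<Sum>b\<in>B. \<Sum>i\<in>I. c i * f i a b)"
proof -
  have "(\<Sum>i\<in>I. c i * (\<Sum>a\<in>A. \<Sum>b\<in>B. f i a b)) = (\<Sum>i\<in>I. \<Sum>a\<in>A. \<Sum>b\<in>B. c i * f i a b)"
    by (simp add: sum_distrib_left)
  also have "\<dots> = (\<Sum>a\<in>A. \<Sum>i\<in>I. \<Sum>b\<in>B. c i * f i a b)" by (rule sum.swap)
  also have "\<dots> = (\<Sum>a\<in>A. \<Sum>b\<in>B. \<Sum>i\<in>I. c i * f i a b)"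
    by (rule sum.cong[OF refl], rule sum.swap)
  finally show ?thesis .
qed

lemma sym_rank1:
  fixes x y :: "complex^'n"
  assumes "\<And>a b. M a b = x $ a * y $ b" and "\<And>a b. M a b = M b a"
  shows "\<exists>p :: complex^'n. \<forall>a b. M a b = p $ a * p $ b"
proof (cases "y = 0")
  case True
  then show ?thesis using assms(1) by (intro exI[of _ 0]) simp
next
  case False
  then obtain b0 where b0: "y $ b0 \<noteq> 0" by (auto simp: vec_eq_iff)
  define t where "t = x $ b0 / y $ b0"
  have xa: "x $ a = t * y $ a" for a
  proof -
    have "x $ a * y $ b0 = x $ b0 * y $ a" using assms by metis
    then show ?thesis using b0 by (simp add: t_def field_simps)
  qed
  define p where "p = csqrt t *s y"
  have "M a b = p $ a * p $ b" for a b
  proof -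
    have "p $ a * p $ b = (csqrt t)^2 * y $ a * y $ b" by (simp add: p_def power2_eq_square ac_simps)
    also have "\<dots> = t * y $ a * y $ b" by simp
    finally show ?thesis using assms(1) xa by simp
  qed
  then show ?thesis by blast
qed



theorem corollary4p8:
  fixes A :: "('n::finite) tensor4"
    and r :: nat and lam :: "nat \<Rightarrow> real" and E :: "nat \<Rightarrow> complex^'n^'n"
  assumes cps: "CPS A"
    and r_def: "r = rank_m A"
    and decomp: "A = (\<lambda>a b c d. \<Sum>i<r. complex_of_real (lam i) * kron (E i) (mconj (E i)) a b c d)"
    and lam_nz: "\<forall>i<r. lam i \<noteq> 0"
    and sym: "\<forall>i<r. transpose (E i) = E i"
    and orth: "\<forall>i<r. \<forall>j<r. minner (E i) (E j) = (if i = j then 1 else 0)"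
  shows "((\<forall>i<r. rank (E i) = 1) \<longrightarrow>
           (\<exists>(lam' :: nat \<Rightarrow> real) (p :: nat \<Rightarrow> complex^'n).
              A = (\<lambda>a b c d. \<Sum>i<r. complex_of_real (lam' i) *
                      (p i $ a * p i $ b * cnj (p i $ c) * cnj (p i $ d))) \<and>
              (\<forall>i<r. \<forall>j<r. i \<noteq> j \<longrightarrow> hprod (p i) (p j) = 0)))
       \<and> (\<forall>R. R = Max ((\<lambda>i. rank (E i)) ` {..<r}) \<longrightarrow>
              r \<le> cp_rank A \<and> cp_rank A \<le> r * R^2)
       \<and> (r = 1 \<longrightarrow> cp_rank A = (rank (E 0))^2)"
proof -
  have Aeq: "A a b c d = (\<Sum>i<r. complex_of_real (lam i) * (E i $ a $ b * cnj (E i $ c $ d)))" for a b c d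
    by (simp add: decomp kron_def mconj_def)
  have "\<forall>i. \<exists>(x :: nat \<Rightarrow> complex^'n) (y :: nat \<Rightarrow> complex^'n).
          \<forall>a b. E i $a$b = (\<Sum>k<rank (E i). x k $ a * y k $ b)"
    using rank_decomp by blast
  then obtain X Y :: "nat \<Rightarrow> nat \<Rightarrow> complex^'n" where
    XY: "\<And>i a b. E i $a$b = (\<Sum>k<rank (E i). X i k $ a * Y i k $ b)"
    by metis
  define S where "S = Sigma {..<r} (\<lambda>i. {..<rank (E i)} \<times> {..<rank (E i)})"
  define T where "T i k l a b c d = (complex_of_real (lam i) * X i k $ a) * Y i k $ b * cnj (X i l $ c) * cnj (Y i l $ d)"
    for i k l a b c d
  have dec1: "cpdec A (card S)"
  proof (rule cpdec_set)
    show "finite S" by (simp add: S_def)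
    show "A = (\<lambda>a b c d. \<Sum>q\<in>S. ((\<lambda>q. complex_of_real (lam (fst q)) *s X (fst q) (snd (snd q))) q) $ a *
            ((\<lambda>q. Y (fst q) (snd (snd q))) q) $ b *
            ((\<lambda>q. \<chi> c. cnj (X (fst q) (fst (snd q)) $ c)) q) $ c *
            ((\<lambda>q. \<chi> d. cnj (Y (fst q) (fst (snd q)) $ d)) q) $ d)"
    proof (intro ext)
      fix a b c d
      have "A a b c d = (\<Sum>i<r. \<Sum>l<rank (E i). \<Sum>k<rank (E i). T i k l a b c d)"
        unfolding Aeq XY T_def
        by (simp add: sum_distrib_left sum_distrib_right ac_simps)
      also have "\<dots> = (\<Sum>i<r. \<Sum>p\<in>{..<rank (E i)} \<times> {..<rank (E i)}. T i (snd p) (fst p) a b c d)"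
        by (simp add: sum.cartesian_product case_prod_beta')
      also have "\<dots> = (\<Sum>q\<in>S. T (fst q) (snd (snd q)) (fst (snd q)) a b c d)"
        unfolding S_def by (subst sum.Sigma) (auto simp: case_prod_beta')
      finally show "A a b c d = (\<Sum>q\<in>S. ((\<lambda>q. complex_of_real (lam (fst q)) *s X (fst q) (snd (snd q))) q) $ a *
            ((\<lambda>q. Y (fst q) (snd (snd q))) q) $ b *
            ((\<lambda>q. \<chi> c. cnj (X (fst q) (fst (snd q)) $ c)) q) $ c *
            ((\<lambda>q. \<chi> d. cnj (Y (fst q) (fst (snd q)) $ d)) q) $ d)"
        by (simp add: T_def)
    qed
  qed
  have cardS: "card S = (\<Sum>i<r. rank (E i) * rank (E i))"
    unfolding S_def by (simp add: card_SigmaI)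
  have upper: "cp_rank A \<le> r * R^2" if R: "R = Max ((\<lambda>i. rank (E i)) ` {..<r})" for R
  proof -
    have "card S \<le> (\<Sum>i<r. R * R)"
      unfolding cardS
    proof (rule sum_mono)
      fix i assume "i \<in> {..<r}"
      then have "rank (E i) \<le> R" unfolding R by (intro Max_ge) auto
      then show "rank (E i) * rank (E i) \<le> R * R" by (intro mult_le_mono)
    qed
    also have "\<dots> = r * R^2" by (simp add: power2_eq_square)
    finally have "cpdec A (r * R^2)" using cpdec_mono[OF dec1] by blast
    then show ?thesis by (rule cpdec_le)
  qed
  have dec: "cpdec A (cp_rank A)" by (rule cpdec_cp[OF dec1])
  have lower: "r \<le> cp_rank A"
  proof -
    define F :: "nat \<Rightarrow> complex^('n\<times>'n)" where "F i = (\<chi> p. E i $ fst p $ snd p)" for i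
    have "card {..<r} \<le> cp_rank A"
    proof (rule cp_lower[OF dec, of "{..<r}" F])
      show "finite {..<r}" by simp
    next
      fix c assume c: "(\<Sum>i\<in>{..<r}. c i *s F i) = 0"
      have comp: "(\<Sum>i<r. c i * E i $ a $ b) = 0" for a b
      proof -
        have "(\<Sum>i\<in>{..<r}. c i *s F i) $ (a, b) = 0" using c by simp
        then show ?thesis by (simp add: F_def)
      qed
      show "\<forall>i\<in>{..<r}. c i = 0"
      proof
        fix j assume j: "j \<in> {..<r}"
        have "(\<Sum>i<r. c i * minner (E i) (E j)) = (\<Sum>i<r. if i = j then c i else 0)"
          by (rule sum.cong) (use orth j in auto)
        then have "c j = (\<Sum>i<r. c i * minner (E i) (E j))" using j by simp
        also have "\<dots> = (\<Sum>a\<in>UNIV. \<Sum>b\<in>UNIV. \<Sum>i<r. c i * (E i $ a $ b * cnj (E j $ a $ b)))"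
          unfolding minner_def by (rule swap3)
        also have "\<dots> = (\<Sum>a\<in>UNIV. \<Sum>b\<in>UNIV. (\<Sum>i<r. c i * E i $ a $ b) * cnj (E j $ a $ b))"
          by (simp add: sum_distrib_right mult.assoc)
        also have "\<dots> = 0" by (simp add: comp)
        finally show "c j = 0" .
      qed
    next
      fix j assume j: "j \<in> {..<r}"
      define v where "v q = (\<chi> p. A (fst p) (snd p) (fst q) (snd q))" for q :: "'n\<times>'n"
      have "F j = (\<Sum>q\<in>UNIV. (E j $ fst q $ snd q / complex_of_real (lam j)) *s v q)"
        unfolding vec_eq_iff
      proof
        fix p :: "'n \<times> 'n"
        obtain a b where p: "p = (a, b)" by fastforce
        have lj: "complex_of_real (lam j) \<noteq> 0" using lam_nz j by simp
        have "(\<Sum>q\<in>UNIV. (E j $ fst q $ snd q / complex_of_real (lam j)) *s v q) $ p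
           = (\<Sum>q\<in>UNIV. (E j $ fst q $ snd q / complex_of_real (lam j)) * A a b (fst q) (snd q))"
          by (simp add: v_def p)
        also have "\<dots> = (\<Sum>c\<in>UNIV. \<Sum>d\<in>UNIV. (E j $ c $ d / complex_of_real (lam j)) * A a b c d)"
          using sum_pair_UNIV[of "\<lambda>q. (E j $ fst q $ snd q / complex_of_real (lam j)) * A a b (fst q) (snd q)"] by simp
        also have "\<dots> = (\<Sum>c\<in>UNIV. \<Sum>d\<in>UNIV. \<Sum>i<r. (complex_of_real (lam i) * E i $ a $ b / complex_of_real (lam j)) * (E j $ c $ d * cnj (E i $ c $ d)))"
          unfolding Aeq by (simp add: sum_distrib_left ac_simps)
        also have "\<dots> = (\<Sum>i<r. (complex_of_real (lam i) * E i $ a $ b / complex_of_real (lam j)) * minner (E j) (E i))"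
          unfolding minner_def by (rule swap3[symmetric])
        also have "\<dots> = (\<Sum>i<r. if i = j then (complex_of_real (lam i) * E i $ a $ b / complex_of_real (lam j)) else 0)"
          by (rule sum.cong) (use orth j in auto)
        also have "\<dots> = E j $ a $ b"
          using j lj by simp
        finally show "F j $ p = (\<Sum>q\<in>UNIV. (E j $ fst q $ snd q / complex_of_real (lam j)) *s v q) $ p"
          by (simp add: F_def p)
      qed
      also have "\<dots> \<in> vec.span (range v)"
        by (intro vec.span_sum vec.span_scale vec.span_base) auto
      finally show "F j \<in> vec.span (range (\<lambda>q. \<chi> p. A (fst p) (snd p) (fst q) (snd q)))"
        by (simp add: v_def)
    qed
    then show ?thesis by simp
  qed
  have part3: "cp_rank A = (rank (E 0))^2" if r1: "r = 1"
  proof -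
    let ?R = "rank (E 0)"
    have "{..<r} = {0::nat}" using r1 by auto
    then have "Max ((\<lambda>i. rank (E i)) ` {..<r}) = ?R" by simp
    then have up: "cp_rank A \<le> ?R^2" using upper[OF refl] r1 by simp
    have l0: "complex_of_real (lam 0) \<noteq> 0" using lam_nz r1 by simp
    have A1: "A a b c d = complex_of_real (lam 0) * (E 0 $ a $ b * cnj (E 0 $ c $ d))" for a b c d
      using Aeq r1 by simp
    obtain g :: "nat \<Rightarrow> complex^'n" and h where
      gh: "\<And>k. k < ?R \<Longrightarrow> g k = row (h k) (E 0)"
      and gind: "\<And>d. (\<Sum>k<?R. d k *s g k) = 0 \<Longrightarrow> \<forall>k<?R. d k = 0"
      using basis_family[of "E 0"] by metis
    define A' where "A' a b c d = A c a d b" for a b c d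
    have dec': "cpdec A' (cp_rank A)" unfolding A'_def by (rule cpdec_perm[OF dec])
    define F :: "nat \<times> nat \<Rightarrow> complex^('n\<times>'n)" where
      "F q = (\<chi> p. g (fst q) $ fst p * cnj (g (snd q) $ snd p))" for q
    have "card ({..<?R} \<times> {..<?R}) \<le> cp_rank A"
    proof (rule cp_lower[OF dec', of _ F])
      show "finite ({..<?R} \<times> {..<?R})" by simp
    next
      fix c assume c: "(\<Sum>q\<in>{..<?R} \<times> {..<?R}. c q *s F q) = 0"
      have comp: "(\<Sum>i<?R. (\<Sum>j<?R. c (i,j) * cnj (g j $ b)) * g i $ a) = 0" for a b
      proof -
        have "(\<Sum>q\<in>{..<?R} \<times> {..<?R}. c q *s F q) $ (a, b) = 0" using c by simp
        then have "(\<Sum>q\<in>{..<?R} \<times> {..<?R}. c q * (g (fst q) $ a * cnj (g (snd q) $ b))) = 0"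
          by (simp add: F_def)
        then have "(\<Sum>i<?R. \<Sum>j<?R. c (i,j) * (g i $ a * cnj (g j $ b))) = 0"
          by (simp add: sum.cartesian_product case_prod_beta')
        then show ?thesis by (simp add: sum_distrib_right sum_distrib_left ac_simps)
      qed
      have step1: "(\<Sum>j<?R. c (i,j) * cnj (g j $ b)) = 0" if i: "i < ?R" for i b
      proof -
        have "(\<Sum>i<?R. (\<Sum>j<?R. c (i,j) * cnj (g j $ b)) *s g i) = 0"
          using comp by (simp add: vec_eq_iff)
        then have "\<forall>k<?R. (\<Sum>j<?R. c (k,j) * cnj (g j $ b)) = 0" by (rule gind)
        then show ?thesis using i by blast
      qed
      have step2: "cnj (c (i,j)) = 0" if i: "i < ?R" and j: "j < ?R" for i j
      proof -
        have "(\<Sum>j<?R. cnj (c (i,j)) *s g j) = 0"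
        proof (simp add: vec_eq_iff, intro allI)
          fix b
          have "cnj (\<Sum>j<?R. c (i,j) * cnj (g j $ b)) = 0" using step1[OF i] by simp
          then show "(\<Sum>j<?R. cnj (c (i,j)) * g j $ b) = 0" by simp
        qed
        then have "\<forall>k<?R. cnj (c (i,k)) = 0" by (rule gind)
        then show ?thesis using j by blast
      qed
      show "\<forall>q\<in>{..<?R} \<times> {..<?R}. c q = 0" using step2 by fastforce
    next
      fix q assume q: "q \<in> {..<?R} \<times> {..<?R}"
      obtain i j where ij: "q = (i, j)" "i < ?R" "j < ?R" using q by blast
      have "F q = (1 / complex_of_real (lam 0)) *s (\<chi> p. A' (fst p) (snd p) (h i) (h j))"
        unfolding vec_eq_iff
        using l0 by (simp add: F_def ij gh A'_def A1 row_def)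
      also have "\<dots> \<in> vec.span (range (\<lambda>q. \<chi> p. A' (fst p) (snd p) (fst q) (snd q)))"
        by (intro vec.span_scale vec.span_base) (auto intro: range_eqI[of _ _ "(h i, h j)"])
      finally show "F q \<in> vec.span (range (\<lambda>q. \<chi> p. A' (fst p) (snd p) (fst q) (snd q)))" .
    qed
    then have "?R^2 \<le> cp_rank A" by (simp add: power2_eq_square)
    then show ?thesis using up by simp
  qed
  have part1: "\<exists>(lam' :: nat \<Rightarrow> real) (p :: nat \<Rightarrow> complex^'n).
              A = (\<lambda>a b c d. \<Sum>i<r. complex_of_real (lam' i) *
                      (p i $ a * p i $ b * cnj (p i $ c) * cnj (p i $ d))) \<and>
              (\<forall>i<r. \<forall>j<r. i \<noteq> j \<longrightarrow> hprod (p i) (p j) = 0)"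
    if r1: "\<forall>i<r. rank (E i) = 1"
  proof -
    have "\<forall>i. \<exists>p :: complex^'n. i < r \<longrightarrow> (\<forall>a b. E i $ a $ b = p $ a * p $ b)"
    proof
      fix i
      show "\<exists>p :: complex^'n. i < r \<longrightarrow> (\<forall>a b. E i $ a $ b = p $ a * p $ b)"
      proof (cases "i < r")
        case True
        have s: "E i $ a $ b = E i $ b $ a" for a b
        proof -
          have "transpose (E i) $ a $ b = E i $ a $ b" using sym True by simp
          then show ?thesis by (simp add: transpose_def)
        qed
        have "E i $ a $ b = X i 0 $ a * Y i 0 $ b" for a b
          using XY[of i a b] r1 True by simp
        then obtain p :: "complex^'n" where "\<forall>a b. E i $ a $ b = p $ a * p $ b"
          using sym_rank1[of "\<lambda>a b. E i $ a $ b"] s by blast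
        then show ?thesis by blast
      qed auto
    qed
    then obtain P :: "nat \<Rightarrow> complex^'n" where P: "\<And>i a b. i < r \<Longrightarrow> E i $ a $ b = P i $ a * P i $ b"
      by metis
    have eqA: "A = (\<lambda>a b c d. \<Sum>i<r. complex_of_real (lam i) *
                      (P i $ a * P i $ b * cnj (P i $ c) * cnj (P i $ d)))"
      by (intro ext, unfold Aeq, rule sum.cong) (simp_all add: P mult.assoc)
    have orthP: "hprod (P i) (P j) = 0" if ij: "i < r" "j < r" "i \<noteq> j" for i j
    proof -
      define s where "s = (\<Sum>a\<in>UNIV. P i $ a * cnj (P j $ a))"
      have "minner (E i) (E j) = (\<Sum>a\<in>UNIV. \<Sum>b\<in>UNIV. (P i $ a * cnj (P j $ a)) * (P i $ b * cnj (P j $ b)))"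
        unfolding minner_def using ij by (simp add: P ac_simps)
      also have "\<dots> = s * s" by (simp add: s_def sum_product)
      finally have "s * s = 0" using orth ij by simp
      then have "s = 0" by simp
      then have "cnj s = 0" by simp
      then show ?thesis by (simp add: s_def hprod_def mult.commute)
    qed
    show ?thesis using eqA orthP by blast
  qed
  show ?thesis using part1 part3 upper lower by blast
qed

end
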